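(* Let $T$ be a continuous Archimedean $t$-norm, let $A$ be a fuzzy number in $\mathbb R$ with modal value $m=\mathbb M A$, and let $(X_n)_{n\ge1}$ be a sequence of $T$-independent fuzzy variables on a possibility space $(\Omega,\Pi)$, each with membership function $A$. Let $\bar A_n=\frac1n(X_1+\dots+X_n)$ and, for odd $n$, $M_n=\mathrm{median}(X_1,\dots,X_n)$ (defined pointwise on $\Omega$). Then $(\bar A_n)_{n\ge1}$ and $(M_{2n+1})_{n\ge0}$ converge to the constant $m$ in distribution, in measure, and almost surely.
   Context: A possibility space $(\Omega,\Pi)$: $\Pi(S)=\sup_{\omega\in S}\pi(\omega)$ ($\sup\emptyset=0$) for a map $\pi:\Omega\to[0,1]$ attaining $1$. A fuzzy variable is a map $X:\Omega\to\mathbb R$; its membership function is $A_X(y)=\Pi(X^{-1}(y))$. A $t$-norm is a commutative, associative map $T:[0,1]^2\to[0,1]$, non-decreasing in each variable, with neutral element $1$; continuous and Archimedean means continuous and for all $x,y\in(0,1)$ some $n$ gives $T(x,\dots,x)<y$ ($n$ arguments). Fuzzy variables $X_1,X_2,\dots$ are $T$-independent if for all distinct indices $i_1,\dots,i_k$ and all $B_1,\dots,B_k\subseteq\mathbb R$, $\Pi(X_{i_1}\in B_1,\dots,X_{i_k}\in B_k)=T(\Pi(X_{i_1}\in B_1),\dots,\Pi(X_{i_k}\in B_k))$. A fuzzy number is a map $A:\mathbb R\to[0,1]$ whose $\alpha$-cuts $\{A\ge\alpha\}$, $\alpha\in(0,1]$, are nonempty compact intervals and with exactly one point $m$ with $A(m)=1$;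 $\mathbb M A=m$. Convergence to a constant $c$: in distribution means $A_{Y_n}^\alpha\to\{c\}$ in the Hausdorff metric for every $\alpha\in(0,1]$; in measure means $\Pi(|Y_n-c|\ge\epsilon)\to0$ for all $\epsilon>0$; almost surely means $\Pi(\{\omega: Y_n(\omega)\not\to c\})=0$. *)

theory Defs
  imports "HOL-Analysis.Analysis" "HOL-Library.Extended_Real"
begin

definition poss_dist :: "('w \<Rightarrow> real) \<Rightarrow> bool" where
  "poss_dist \<pi> \<longleftrightarrow> (\<forall>\<omega>. 0 \<le> \<pi> \<omega> \<and> \<pi> \<omega> \<le> 1) \<and> (\<exists>\<omega>. \<pi> \<omega> = 1)"

definition Poss :: "('w \<Rightarrow> real) \<Rightarrow> 'w set \<Rightarrow> real" where
  "Poss \<pi> S = (if S = {} then 0 else (SUP \<omega>\<in>S. \<pi> \<omega>))"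

definition membership :: "('w \<Rightarrow> real) \<Rightarrow> ('w \<Rightarrow> real) \<Rightarrow> real \<Rightarrow> real" where
  "membership \<pi> X y = Poss \<pi> (X -` {y})"

definition is_tnorm :: "(real \<Rightarrow> real \<Rightarrow> real) \<Rightarrow> bool" where
  "is_tnorm T \<longleftrightarrow>
     (\<forall>x\<in>{0..1}. \<forall>y\<in>{0..1}. T x y \<in> {0..1}) \<and>
     (\<forall>x\<in>{0..1}. \<forall>y\<in>{0..1}. T x y = T y x) \<and>
     (\<forall>x\<in>{0..1}. \<forall>y\<in>{0..1}. \<forall>z\<in>{0..1}. T (T x y) z = T x (T y z)) \<and>
     (\<forall>x\<in>{0..1}. \<forall>x'\<in>{0..1}. \<forall>y\<in>{0..1}. x \<le> x' \<longrightarrow> T x y \<le> T x' y) \<and>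
     (\<forall>x\<in>{0..1}. T x 1 = x)"

definition tnorm_list :: "(real \<Rightarrow> real \<Rightarrow> real) \<Rightarrow> real list \<Rightarrow> real" where
  "tnorm_list T xs = foldr T xs 1"

definition continuous_archimedean_tnorm :: "(real \<Rightarrow> real \<Rightarrow> real) \<Rightarrow> bool" where
  "continuous_archimedean_tnorm T \<longleftrightarrow>
     is_tnorm T \<and>
     continuous_on ({0..1} \<times> {0..1}) (\<lambda>(x, y). T x y) \<and>
     (\<forall>x\<in>{0<..<1}. \<forall>y\<in>{0<..<1}. \<exists>n. tnorm_list T (replicate n x) < y)"

text \<open>T-independence of the fuzzy variables X_1, X_2, ... (indices >= 1).
  A list ps of pairs (i_j, B_j) with distinct indices encodes the events X_{i_j} in B_j.\<close>
definition T_independent ::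
  "(real \<Rightarrow> real \<Rightarrow> real) \<Rightarrow> ('w \<Rightarrow> real) \<Rightarrow> (nat \<Rightarrow> 'w \<Rightarrow> real) \<Rightarrow> bool" where
  "T_independent T \<pi> X \<longleftrightarrow>
     (\<forall>ps :: (nat \<times> real set) list.
        distinct (map fst ps) \<longrightarrow> (\<forall>i\<in>set (map fst ps). 1 \<le> i) \<longrightarrow>
        Poss \<pi> {\<omega>. \<forall>(i, B)\<in>set ps. X i \<omega> \<in> B} =
        tnorm_list T (map (\<lambda>(i, B). Poss \<pi> {\<omega>. X i \<omega> \<in> B}) ps))"

definition fuzzy_number :: "(real \<Rightarrow> real) \<Rightarrow> bool" where
  "fuzzy_number A \<longleftrightarrow>
     (\<forall>y. 0 \<le> A y \<and> A y \<le> 1) \<and>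
     (\<forall>\<alpha>\<in>{0<..1}. {y. \<alpha> \<le> A y} \<noteq> {} \<and> compact {y. \<alpha> \<le> A y} \<and> is_interval {y. \<alpha> \<le> A y}) \<and>
     (\<exists>!m. A m = 1)"

definition modal_value :: "(real \<Rightarrow> real) \<Rightarrow> real" where
  "modal_value A = (THE m. A m = 1)"

text \<open>Hausdorff distance (extended-real valued, so unbounded/empty sets give infinity).\<close>
definition hausdorff_dist :: "real set \<Rightarrow> real set \<Rightarrow> ereal" where
  "hausdorff_dist S U =
     max (SUP s\<in>S. INF u\<in>U. ereal (dist s u)) (SUP u\<in>U. INF s\<in>S. ereal (dist s u))"

definition alpha_cut :: "(real \<Rightarrow> real) \<Rightarrow> real \<Rightarrow> real set" where
  "alpha_cut A \<alpha> = {y. \<alpha> \<le> A y}"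

definition conv_distribution :: "('w \<Rightarrow> real) \<Rightarrow> (nat \<Rightarrow> 'w \<Rightarrow> real) \<Rightarrow> real \<Rightarrow> bool" where
  "conv_distribution \<pi> Y c \<longleftrightarrow>
     (\<forall>\<alpha>\<in>{0<..1}. (\<lambda>n. hausdorff_dist (alpha_cut (membership \<pi> (Y n)) \<alpha>) {c}) \<longlonglongrightarrow> 0)"

definition conv_measure :: "('w \<Rightarrow> real) \<Rightarrow> (nat \<Rightarrow> 'w \<Rightarrow> real) \<Rightarrow> real \<Rightarrow> bool" where
  "conv_measure \<pi> Y c \<longleftrightarrow>
     (\<forall>\<epsilon>>0. (\<lambda>n. Poss \<pi> {\<omega>. \<epsilon> \<le> \<bar>Y n \<omega> - c\<bar>}) \<longlonglongrightarrow> 0)"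

definition conv_almost_surely :: "('w \<Rightarrow> real) \<Rightarrow> (nat \<Rightarrow> 'w \<Rightarrow> real) \<Rightarrow> real \<Rightarrow> bool" where
  "conv_almost_surely \<pi> Y c \<longleftrightarrow> Poss \<pi> {\<omega>. \<not> ((\<lambda>n. Y n \<omega>) \<longlonglongrightarrow> c)} = 0"

text \<open>Abar_n = (X_1 + ... + X_n)/n (the value at n = 0 is irrelevant for limits).\<close>
definition sample_mean :: "(nat \<Rightarrow> 'w \<Rightarrow> real) \<Rightarrow> nat \<Rightarrow> 'w \<Rightarrow> real" where
  "sample_mean X n \<omega> = (\<Sum>i=1..n. X i \<omega>) / real n"

text \<open>M_{2n+1} = median(X_1, ..., X_{2n+1}), pointwise: the (n+1)-th smallest value.\<close>
definition sample_median_odd :: "(nat \<Rightarrow> 'w \<Rightarrow> real) \<Rightarrow> nat \<Rightarrow> 'w \<Rightarrow> real" where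
  "sample_median_odd X n \<omega> = sort (map (\<lambda>i. X i \<omega>) [1..<2*n+2]) ! n"

end

theory Submission imports Defs begin

locale setting =
  fixes T :: "real \<Rightarrow> real \<Rightarrow> real"
    and A :: "real \<Rightarrow> real"
    and \<pi> :: "'w \<Rightarrow> real"
    and X :: "nat \<Rightarrow> 'w \<Rightarrow> real"
  assumes CA: "continuous_archimedean_tnorm T"
    and FN: "fuzzy_number A"
    and PD: "poss_dist \<pi>"
    and TI: "T_independent T \<pi> X"
    and MEM: "\<forall>n\<ge>1. membership \<pi> (X n) = A"
begin

abbreviation "tn \<equiv> tnorm_list T"

lemma TN: "is_tnorm T" using CA unfolding continuous_archimedean_tnorm_def by auto

lemma T_range: "x \<in> {0..1} \<Longrightarrow> y \<in> {0..1} \<Longrightarrow> T x y \<in> {0..1}"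
  using TN unfolding is_tnorm_def by blast
lemma T_comm: "x \<in> {0..1} \<Longrightarrow> y \<in> {0..1} \<Longrightarrow> T x y = T y x"
  using TN unfolding is_tnorm_def by blast
lemma T_monoL: "x \<in> {0..1} \<Longrightarrow> x' \<in> {0..1} \<Longrightarrow> y \<in> {0..1} \<Longrightarrow> x \<le> x' \<Longrightarrow> T x y \<le> T x' y"
  using TN unfolding is_tnorm_def by blast
lemma T_monoR: "x \<in> {0..1} \<Longrightarrow> y \<in> {0..1} \<Longrightarrow> y' \<in> {0..1} \<Longrightarrow> y \<le> y' \<Longrightarrow> T x y \<le> T x y'"
  using T_monoL[of y y' x] T_comm by simp
lemma T_one: "x \<in> {0..1} \<Longrightarrow> T x 1 = x"
  using TN unfolding is_tnorm_def by blast
lemma T_oneL: "x \<in> {0..1} \<Longrightarrow> T 1 x = x"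
  using T_one T_comm[of 1 x] by simp

lemma tn_range: "\<forall>x\<in>set xs. x \<in> {0..1} \<Longrightarrow> tn xs \<in> {0..1}"
  by (induction xs) (auto simp: tnorm_list_def intro!: T_range[simplified])

lemma tn_mono: "\<forall>x\<in>set xs. 0 \<le> f x \<and> f x \<le> g x \<and> g x \<le> 1 \<Longrightarrow> tn (map f xs) \<le> tn (map g xs)"
proof (induction xs)
  case Nil then show ?case by (simp add: tnorm_list_def)
next
  case (Cons x xs)
  have r1: "tn (map f xs) \<in> {0..1}" "tn (map g xs) \<in> {0..1}"
    using Cons.prems by (intro tn_range; force)+
  have "T (f x) (tn (map f xs)) \<le> T (g x) (tn (map f xs))"
    using Cons.prems r1 by (intro T_monoL) auto
  also have "\<dots> \<le> T (g x) (tn (map g xs))"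
    using Cons r1 by (intro T_monoR) auto
  finally show ?case by (simp add: tnorm_list_def)
qed

lemma tn_if: "a \<in> {0..1} \<Longrightarrow> tn (map (\<lambda>x. if P x then a else 1) xs) = tn (replicate (length (filter P xs)) a)"
proof (induction xs)
  case Nil then show ?case by (simp add: tnorm_list_def)
next
  case (Cons x xs)
  have "tn (replicate (length (filter P xs)) a) \<in> {0..1}" using Cons.prems by (intro tn_range) auto
  then show ?case using Cons by (auto simp: tnorm_list_def T_oneL)
qed

lemma tn_rep_anti: assumes "a \<in> {0..1}" "k \<le> k'" shows "tn (replicate k' a) \<le> tn (replicate k a)"
proof (rule lift_Suc_antimono_le[OF _ assms(2)])
  fix n
  have r: "tn (replicate n a) \<in> {0..1}" using assms by (intro tn_range) auto
  have "T a (tn (replicate n a)) \<le> T 1 (tn (replicate n a))"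
    using assms r by (intro T_monoL) auto
  then show "tn (replicate (Suc n) a) \<le> tn (replicate n a)" using r by (simp add: tnorm_list_def T_oneL)
qed

lemma arch: assumes "0 \<le> a" "a < 1" "0 < \<eta>" shows "\<exists>K. tn (replicate K a) < \<eta>"
proof (cases "a = 0")
  case True
  then show ?thesis using assms by (intro exI[of _ 1]) (simp add: tnorm_list_def T_one)
next
  case False
  define e where "e = min \<eta> (1/2)"
  have "a \<in> {0<..<1}" "e \<in> {0<..<1}" using assms False by (auto simp: e_def)
  then obtain K where "tn (replicate K a) < e" using CA unfolding continuous_archimedean_tnorm_def by blast
  then show ?thesis by (intro exI[of _ K]) (simp add: e_def)
qed

lemma tn_ones: "tn (replicate k 1) = 1"
  by (induction k) (auto simp: tnorm_list_def T_one)

lemma pi_range: "0 \<le> \<pi> w" "\<pi> w \<le> 1" using PD unfolding poss_dist_def by auto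

lemma Poss_ge: "w \<in> S \<Longrightarrow> \<pi> w \<le> Poss \<pi> S"
  unfolding Poss_def by (auto intro!: cSUP_upper bdd_aboveI[of _ 1] simp: pi_range)

lemma Poss_le: "0 \<le> c \<Longrightarrow> (\<And>w. w \<in> S \<Longrightarrow> \<pi> w \<le> c) \<Longrightarrow> Poss \<pi> S \<le> c"
  unfolding Poss_def by (auto intro!: cSUP_least)

lemma Poss_nonneg: "0 \<le> Poss \<pi> S"
  unfolding Poss_def using pi_range
  by (auto intro!: cSUP_upper2 bdd_aboveI[of _ 1])

lemma Poss_mono: "S \<subseteq> S' \<Longrightarrow> Poss \<pi> S \<le> Poss \<pi> S'"
  by (rule Poss_le[OF Poss_nonneg]) (auto intro: Poss_ge)


definition "m = modal_value A"

lemma A_m: "A m = 1" and A_uniq: "A y = 1 \<Longrightarrow> y = m"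
proof -
  have ex: "\<exists>!m. A m = 1" using FN unfolding fuzzy_number_def by blast
  show "A m = 1" unfolding m_def modal_value_def by (rule theI'[OF ex])
  then show "A y = 1 \<Longrightarrow> y = m" using ex by blast
qed

lemma A_range: "0 \<le> A y" "A y \<le> 1" using FN unfolding fuzzy_number_def by auto

lemma cut_compact: "0 < \<alpha> \<Longrightarrow> \<alpha> \<le> 1 \<Longrightarrow> compact {y. \<alpha> \<le> A y}"
  using FN unfolding fuzzy_number_def by auto

lemma TI_app: "distinct (map fst ps) \<Longrightarrow> (\<forall>i\<in>set (map fst ps). 1 \<le> i) \<Longrightarrow>
        Poss \<pi> {\<omega>. \<forall>(i, B)\<in>set ps. X i \<omega> \<in> B} =
        tn (map (\<lambda>(i, B). Poss \<pi> {\<omega>. X i \<omega> \<in> B}) ps)"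
  using TI unfolding T_independent_def by blast

lemma bound: assumes "distinct I" "\<forall>i\<in>set I. 1 \<le> i"
  shows "\<pi> w \<le> tn (map (\<lambda>i. A (X i w)) I)"
proof -
  define ps where "ps = map (\<lambda>i. (i, {X i w})) I"
  have fst: "map fst ps = I" unfolding ps_def by (induction I) auto
  have eq: "Poss \<pi> {\<omega>. \<forall>(i, B)\<in>set ps. X i \<omega> \<in> B} =
        tn (map (\<lambda>(i, B). Poss \<pi> {\<omega>. X i \<omega> \<in> B}) ps)"
    by (rule TI_app) (use assms fst in auto)
  have "map (\<lambda>(i, B). Poss \<pi> {\<omega>. X i \<omega> \<in> B}) ps = map (\<lambda>i. membership \<pi> (X i) (X i w)) I"
    unfolding ps_def membership_def by (auto simp: vimage_def)
  also have "\<dots> = map (\<lambda>i. A (X i w)) I" using MEM assms(2) by auto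
  finally have h1: "Poss \<pi> {\<omega>. \<forall>(i, B)\<in>set ps. X i \<omega> \<in> B} = tn (map (\<lambda>i. A (X i w)) I)" using eq by simp
  have h2: "w \<in> {\<omega>. \<forall>(i, B)\<in>set ps. X i \<omega> \<in> B}" unfolding ps_def by auto
  show ?thesis using Poss_ge[OF h2] h1 by simp
qed

lemma bound1: assumes "1 \<le> i" shows "\<pi> w \<le> A (X i w)"
  using bound[of "[i]" w] assms A_range by (simp add: tnorm_list_def T_one)

lemma bound_count: assumes "distinct I" "\<forall>i\<in>set I. 1 \<le> i" "0 \<le> a" "a \<le> 1"
  and ha: "\<forall>y. \<delta> \<le> \<bar>y - m\<bar> \<longrightarrow> A y \<le> a"
  shows "\<pi> w \<le> tn (replicate (length (filter (\<lambda>i. \<delta> \<le> \<bar>X i w - m\<bar>) I)) a)"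
proof -
  have "\<pi> w \<le> tn (map (\<lambda>i. A (X i w)) I)" by (rule bound[OF assms(1,2)])
  also have "\<dots> \<le> tn (map (\<lambda>i. if \<delta> \<le> \<bar>X i w - m\<bar> then a else 1) I)"
    using ha A_range assms by (intro tn_mono) auto
  also have "\<dots> = tn (replicate (length (filter (\<lambda>i. \<delta> \<le> \<bar>X i w - m\<bar>) I)) a)"
    using assms by (intro tn_if) auto
  finally show ?thesis .
qed

lemma ones: assumes "distinct I" "\<forall>i\<in>set I. 1 \<le> i"
  shows "1 \<le> Poss \<pi> {\<omega>. \<forall>i\<in>set I. X i \<omega> = m}"
proof -
  define ps where "ps = map (\<lambda>i. (i, {m})) I"
  have fst: "map fst ps = I" unfolding ps_def by (induction I) auto
  have eq: "Poss \<pi> {\<omega>. \<forall>(i, B)\<in>set ps. X i \<omega> \<in> B} =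
        tn (map (\<lambda>(i, B). Poss \<pi> {\<omega>. X i \<omega> \<in> B}) ps)"
    by (rule TI_app) (use assms fst in auto)
  have "map (\<lambda>(i, B). Poss \<pi> {\<omega>. X i \<omega> \<in> B}) ps = map (\<lambda>i. membership \<pi> (X i) m) I"
    unfolding ps_def membership_def by (auto simp: vimage_def)
  also have "\<dots> = map (\<lambda>i. 1) I" using MEM assms(2) A_m by auto
  also have "\<dots> = replicate (length I) 1" by (simp add: map_replicate_const)
  finally have "Poss \<pi> {\<omega>. \<forall>(i, B)\<in>set ps. X i \<omega> \<in> B} = 1" using eq tn_ones by simp
  moreover have "{\<omega>. \<forall>(i, B)\<in>set ps. X i \<omega> \<in> B} = {\<omega>. \<forall>i\<in>set I. X i \<omega> = m}"
    unfolding ps_def by auto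
  ultimately show ?thesis by simp
qed

lemma gap: assumes "0 < \<delta>" shows "\<exists>a. 0 \<le> a \<and> a < 1 \<and> (\<forall>y. \<delta> \<le> \<bar>y - m\<bar> \<longrightarrow> A y \<le> a)"
proof (rule ccontr)
  assume "\<not> ?thesis"
  then have H: "\<And>a. 0 \<le> a \<Longrightarrow> a < 1 \<Longrightarrow> \<exists>y. \<delta> \<le> \<bar>y - m\<bar> \<and> a < A y" by force
  define yy where "yy k = (SOME y. \<delta> \<le> \<bar>y - m\<bar> \<and> 1 - 1 / (real k + 2) < A y)" for k
  have yk: "\<delta> \<le> \<bar>yy k - m\<bar> \<and> 1 - 1 / (real k + 2) < A (yy k)" for k
  proof -
    have "\<exists>y. \<delta> \<le> \<bar>y - m\<bar> \<and> 1 - 1 / (real k + 2) < A y"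
      by (rule H) (auto simp: field_simps)
    then show ?thesis unfolding yy_def by (rule someI_ex)
  qed
  have C: "yy k \<in> {y. 1/2 \<le> A y}" for k
  proof -
    have h: "1/2 \<le> 1 - 1 / (real k + 2)" by (auto simp: field_simps)
    have "1/2 < A (yy k)" using yk[of k] h by linarith
    then show ?thesis by simp
  qed
  obtain l r where l: "strict_mono r" "(yy \<circ> r) \<longlonglongrightarrow> l"
    using compact_imp_seq_compact[OF cut_compact[of "1/2"]] C unfolding seq_compact_def by force
  have "A l = 1"
  proof (rule ccontr)
    assume "A l \<noteq> 1"
    then have lt: "A l < 1" using A_range[of l] by auto
    define \<alpha> where "\<alpha> = (A l + 1) / 2"
    have \<alpha>: "0 < \<alpha>" "\<alpha> \<le> 1" "A l < \<alpha>" "\<alpha> < 1" using lt A_range[of l] by (auto simp: \<alpha>_def)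
    obtain N :: nat where N: "1 / (1 - \<alpha>) < real N" using reals_Archimedean2 by blast
    have ev: "\<forall>\<^sub>F k in sequentially. (yy \<circ> r) k \<in> {y. \<alpha> \<le> A y}"
      unfolding eventually_sequentially
    proof (intro exI[of _ N] allI impI)
      fix k assume "N \<le> k"
      then have "N \<le> r k" using seq_suble[OF l(1), of k] by linarith
      then have "1 / (1 - \<alpha>) < real (r k) + 2" using N by linarith
      then have "1 < (real (r k) + 2) * (1 - \<alpha>)" using \<alpha>
        by (simp add: pos_divide_less_eq)
      then have "\<alpha> \<le> 1 - 1 / (real (r k) + 2)"
        by (simp add: field_simps)
      then show "(yy \<circ> r) k \<in> {y. \<alpha> \<le> A y}" using yk[of "r k"] by auto
    qed
    have "l \<in> {y. \<alpha> \<le> A y}"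
      by (rule Lim_in_closed_set[OF compact_imp_closed[OF cut_compact[OF \<alpha>(1,2)]] ev _ l(2)]) simp
    then show False using \<alpha> by auto
  qed
  then have "l = m" by (rule A_uniq)
  have "(\<lambda>k. \<bar>(yy \<circ> r) k - m\<bar>) \<longlonglongrightarrow> \<bar>l - m\<bar>" by (intro tendsto_intros l(2))
  then have "\<delta> \<le> \<bar>l - m\<bar>" by (rule LIMSEQ_le_const) (use yk in auto)
  then show False using \<open>l = m\<close> assms by simp
qed

lemma bdd: assumes "0 < \<eta>" "\<eta> \<le> 1" shows "\<exists>R\<ge>0. \<forall>y. \<eta> \<le> A y \<longrightarrow> \<bar>y - m\<bar> \<le> R"
proof -
  obtain B where B: "\<forall>x\<in>{y. \<eta> \<le> A y}. norm x \<le> B"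
    using compact_imp_bounded[OF cut_compact[OF assms]] unfolding bounded_iff by blast
  show ?thesis
    by (rule exI[of _ "\<bar>B\<bar> + \<bar>m\<bar>"]) (use B in force)
qed


definition "unif Y \<longleftrightarrow> (\<forall>\<epsilon>>0. \<forall>\<eta>>0. \<exists>N. \<forall>n\<ge>N. \<forall>w. \<epsilon> \<le> \<bar>Y n w - m\<bar> \<longrightarrow> \<pi> w < \<eta>)"

lemma unifD: "unif Y \<Longrightarrow> 0 < \<epsilon> \<Longrightarrow> 0 < \<eta> \<Longrightarrow> \<exists>N. \<forall>n\<ge>N. \<forall>w. \<epsilon> \<le> \<bar>Y n w - m\<bar> \<longrightarrow> \<pi> w < \<eta>"
  unfolding unif_def by blast

lemma unif_measure: assumes "unif Y" shows "conv_measure \<pi> Y m"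
  unfolding conv_measure_def
proof (intro allI impI LIMSEQ_I)
  fix \<epsilon> r :: real assume "0 < \<epsilon>" "0 < r"
  then obtain N where N: "\<forall>n\<ge>N. \<forall>w. \<epsilon> \<le> \<bar>Y n w - m\<bar> \<longrightarrow> \<pi> w < r/2"
    using unifD[OF assms, of \<epsilon> "r/2"] by auto
  show "\<exists>no. \<forall>n\<ge>no. norm (Poss \<pi> {\<omega>. \<epsilon> \<le> \<bar>Y n \<omega> - m\<bar>} - 0) < r"
  proof (intro exI allI impI)
    fix n assume "N \<le> n"
    have "Poss \<pi> {\<omega>. \<epsilon> \<le> \<bar>Y n \<omega> - m\<bar>} \<le> r/2"
      using N \<open>N \<le> n\<close> \<open>0 < r\<close> by (intro Poss_le) (auto intro: less_imp_le)
    then show "norm (Poss \<pi> {\<omega>. \<epsilon> \<le> \<bar>Y n \<omega> - m\<bar>} - 0) < r" using Poss_nonneg \<open>0 < r\<close> by simp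
  qed
qed

lemma unif_as: assumes "unif Y" shows "conv_almost_surely \<pi> Y m"
proof -
  have le: "\<pi> w \<le> 0" if w: "\<not> (\<lambda>n. Y n w) \<longlonglongrightarrow> m" for w
  proof (rule ccontr)
    assume "\<not> \<pi> w \<le> 0"
    then have pos: "0 < \<pi> w" by simp
    have "(\<lambda>n. Y n w) \<longlonglongrightarrow> m"
    proof (rule LIMSEQ_I)
      fix r :: real assume "0 < r"
      then obtain N where N: "\<forall>n\<ge>N. \<forall>w'. r \<le> \<bar>Y n w' - m\<bar> \<longrightarrow> \<pi> w' < \<pi> w"
        using unifD[OF assms \<open>0 < r\<close> pos] by blast
      show "\<exists>no. \<forall>n\<ge>no. norm (Y n w - m) < r"
      proof (intro exI[of _ N] allI impI)
        fix n assume "N \<le> n"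
        then have "\<not> r \<le> \<bar>Y n w - m\<bar>" using N[rule_format, of n w] by linarith
        then show "norm (Y n w - m) < r" by simp
      qed
    qed
    then show False using w by simp
  qed
  have "Poss \<pi> {\<omega>. \<not> (\<lambda>n. Y n \<omega>) \<longlonglongrightarrow> m} \<le> 0"
    by (rule Poss_le) (use le in auto)
  then show ?thesis unfolding conv_almost_surely_def using Poss_nonneg by (meson antisym)
qed

lemma unif_dist: assumes "unif Y" and one: "\<forall>n\<ge>1. 1 \<le> membership \<pi> (Y n) m"
  shows "conv_distribution \<pi> Y m"
  unfolding conv_distribution_def
proof (intro ballI order_tendstoI)
  fix \<alpha> :: real and a :: ereal assume \<alpha>: "\<alpha> \<in> {0<..1}"
  {
    fix n
    have "0 \<le> (INF s\<in>alpha_cut (membership \<pi> (Y n)) \<alpha>. ereal (dist s m))"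
      by (intro INF_greatest) simp
    then have "0 \<le> hausdorff_dist (alpha_cut (membership \<pi> (Y n)) \<alpha>) {m}"
      unfolding hausdorff_dist_def by (simp add: dist_commute le_max_iff_disj)
  } note nn = this
  {
    assume "a < 0"
    then show "\<forall>\<^sub>F n in sequentially. a < hausdorff_dist (alpha_cut (membership \<pi> (Y n)) \<alpha>) {m}"
      using nn by (intro always_eventually allI) (rule less_le_trans)
  }
  assume "0 < a"
  then obtain \<epsilon> where \<epsilon>: "0 < ereal \<epsilon>" "ereal \<epsilon> < a" using ereal_dense2 by blast
  then have \<epsilon>0: "0 < \<epsilon>" by simp
  obtain N where N: "\<forall>n\<ge>N. \<forall>w. \<epsilon> \<le> \<bar>Y n w - m\<bar> \<longrightarrow> \<pi> w < \<alpha>/2"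
    using unifD[OF assms(1) \<epsilon>0, of "\<alpha>/2"] \<alpha> by auto
  show "\<forall>\<^sub>F n in sequentially. hausdorff_dist (alpha_cut (membership \<pi> (Y n)) \<alpha>) {m} < a"
    unfolding eventually_sequentially
  proof (intro exI[of _ "max N 1"] allI impI)
    fix n assume n: "max N 1 \<le> n"
    define S where "S = alpha_cut (membership \<pi> (Y n)) \<alpha>"
    have mS: "m \<in> S" using one n \<alpha> unfolding S_def alpha_cut_def by auto
    have close: "\<bar>s - m\<bar> < \<epsilon>" if "s \<in> S" for s
    proof (rule ccontr)
      assume "\<not> \<bar>s - m\<bar> < \<epsilon>"
      then have "\<forall>w \<in> Y n -` {s}. \<pi> w < \<alpha>/2" using N n by auto
      then have "Poss \<pi> (Y n -` {s}) \<le> \<alpha>/2" using \<alpha> by (intro Poss_le) (auto intro: less_imp_le)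
      moreover have "\<alpha> \<le> Poss \<pi> (Y n -` {s})" using that unfolding S_def alpha_cut_def membership_def by auto
      ultimately show False using \<alpha> by auto
    qed
    have "(SUP s\<in>S. ereal (dist s m)) \<le> ereal \<epsilon>"
      using close by (intro SUP_least) (auto simp: dist_real_def less_imp_le)
    moreover have "(INF s\<in>S. ereal (dist s m)) \<le> ereal \<epsilon>"
      using mS \<epsilon>0 by (intro INF_lower2[of m]) auto
    moreover have "hausdorff_dist S {m} = max (SUP s\<in>S. ereal (dist s m)) (INF s\<in>S. ereal (dist s m))"
      unfolding hausdorff_dist_def by simp
    ultimately have "hausdorff_dist S {m} \<le> ereal \<epsilon>"
      by simp
    then show "hausdorff_dist (alpha_cut (membership \<pi> (Y n)) \<alpha>) {m} < a"
      using \<epsilon> unfolding S_def by simp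
  qed
qed


lemma mean_one: assumes "1 \<le> n" shows "1 \<le> membership \<pi> (sample_mean X n) m"
proof -
  have "1 \<le> Poss \<pi> {\<omega>. \<forall>i\<in>set [1..<n+1]. X i \<omega> = m}" by (rule ones) auto
  also have "\<dots> \<le> Poss \<pi> (sample_mean X n -` {m})"
  proof (rule Poss_mono, rule subsetI)
    fix w assume "w \<in> {\<omega>. \<forall>i\<in>set [1..<n+1]. X i \<omega> = m}"
    then have h: "\<forall>i\<in>set [1..<n+1]. X i w = m" by simp
    have "(\<Sum>i=1..n. X i w) = (\<Sum>i=1..n. m)" by (rule sum.cong) (use h in auto)
    then have "sample_mean X n w = m" using assms unfolding sample_mean_def by simp
    then show "w \<in> sample_mean X n -` {m}" by simp
  qed
  finally show ?thesis unfolding membership_def .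
qed

lemma median_one: "1 \<le> membership \<pi> (sample_median_odd X n) m"
proof -
  have "1 \<le> Poss \<pi> {\<omega>. \<forall>i\<in>set [1..<2*n+2]. X i \<omega> = m}" by (rule ones) auto
  also have "\<dots> \<le> Poss \<pi> (sample_median_odd X n -` {m})"
  proof (rule Poss_mono, rule subsetI)
    fix w assume "w \<in> {\<omega>. \<forall>i\<in>set [1..<2*n+2]. X i \<omega> = m}"
    then have h: "\<forall>i\<in>set [1..<2*n+2]. X i w = m" by simp
    have "map (\<lambda>i. X i w) [1..<2*n+2] = map (\<lambda>i. m) [1..<2*n+2]" using h by simp
    also have "\<dots> = replicate (2*n+1) m" by (simp add: map_replicate_const)
    finally have eqr: "map (\<lambda>i. X i w) [1..<2*n+2] = replicate (2*n+1) m" .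
    have r: "replicate (2*n+1) m ! n = m" by (rule nth_replicate) simp
    have "sample_median_odd X n w = m" unfolding sample_median_odd_def eqr sort_replicate r ..
    then show "w \<in> sample_median_odd X n -` {m}" by simp
  qed
  finally show ?thesis unfolding membership_def .
qed

lemma median_unif: "unif (sample_median_odd X)"
  unfolding unif_def
proof (intro allI impI)
  fix \<epsilon> \<eta> :: real assume \<epsilon>: "0 < \<epsilon>" and \<eta>: "0 < \<eta>"
  obtain a where a: "0 \<le> a" "a < 1" "\<forall>y. \<epsilon> \<le> \<bar>y - m\<bar> \<longrightarrow> A y \<le> a" using gap[OF \<epsilon>] by blast
  obtain K where K: "tn (replicate K a) < \<eta>" using arch[OF a(1,2) \<eta>] by blast
  show "\<exists>N. \<forall>n\<ge>N. \<forall>w. \<epsilon> \<le> \<bar>sample_median_odd X n w - m\<bar> \<longrightarrow> \<pi> w < \<eta>"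
  proof (intro exI[of _ K] allI impI)
    fix n w assume n: "K \<le> n" and dev: "\<epsilon> \<le> \<bar>sample_median_odd X n w - m\<bar>"
    define P where "P x = (\<epsilon> \<le> \<bar>x - m\<bar>)" for x
    define xs where "xs = map (\<lambda>i. X i w) [1..<2*n+2]"
    define s where "s = sort xs"
    have ls: "length s = 2*n+1" unfolding s_def xs_def by simp
    have srt: "sorted s" unfolding s_def by simp
    have med: "sample_median_odd X n w = s ! n" unfolding sample_median_odd_def s_def xs_def by simp
    have sub: "card {j. j < length s \<and> P (s ! j)} \<ge> n + 1"
    proof (cases "m + \<epsilon> \<le> s ! n")
      case True
      have "{n..<2*n+1} \<subseteq> {j. j < length s \<and> P (s ! j)}"
      proof
        fix j assume j: "j \<in> {n..<2*n+1}"
        then have "s ! n \<le> s ! j" using sorted_nth_mono[OF srt, of n j] ls by auto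
        then show "j \<in> {j. j < length s \<and> P (s ! j)}" using True j ls \<epsilon> unfolding P_def by auto
      qed
      from card_mono[OF _ this] show ?thesis by simp
    next
      case False
      then have "s ! n \<le> m - \<epsilon>" using dev med by auto
      have "{0..n} \<subseteq> {j. j < length s \<and> P (s ! j)}"
      proof
        fix j assume j: "j \<in> {0..n}"
        then have "s ! j \<le> s ! n" using sorted_nth_mono[OF srt, of j n] ls by auto
        then show "j \<in> {j. j < length s \<and> P (s ! j)}" using \<open>s ! n \<le> m - \<epsilon>\<close> j ls \<epsilon> unfolding P_def by auto
      qed
      from card_mono[OF _ this] show ?thesis by simp
    qed
    have "length (filter (\<lambda>i. \<epsilon> \<le> \<bar>X i w - m\<bar>) [1..<2*n+2]) = length (filter P xs)"
      unfolding xs_def P_def by (simp add: filter_map o_def)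
    also have "\<dots> = length (filter P s)" unfolding s_def by (metis mset_filter mset_sort size_mset)
    also have "\<dots> = card {j. j < length s \<and> P (s ! j)}" by (rule length_filter_conv_card)
    finally have cnt: "K \<le> length (filter (\<lambda>i. \<epsilon> \<le> \<bar>X i w - m\<bar>) [1..<2*n+2])" using sub n by linarith
    have "\<pi> w \<le> tn (replicate (length (filter (\<lambda>i. \<epsilon> \<le> \<bar>X i w - m\<bar>) [1..<2*n+2])) a)"
      using a by (intro bound_count) auto
    also have "\<dots> \<le> tn (replicate K a)" using a cnt by (intro tn_rep_anti) auto
    finally show "\<pi> w < \<eta>" using K by linarith
  qed
qed


lemma mean_unif: "unif (sample_mean X)"
  unfolding unif_def
proof (intro allI impI)
  fix \<epsilon> \<eta> :: real assume \<epsilon>: "0 < \<epsilon>" and \<eta>: "0 < \<eta>"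
  define \<eta>' where "\<eta>' = min \<eta> 1"
  have \<eta>': "0 < \<eta>'" "\<eta>' \<le> 1" "\<eta>' \<le> \<eta>" using \<eta> by (auto simp: \<eta>'_def)
  define \<delta> where "\<delta> = \<epsilon> / 2"
  have \<delta>: "0 < \<delta>" using \<epsilon> by (simp add: \<delta>_def)
  obtain a where a: "0 \<le> a" "a < 1" "\<forall>y. \<delta> \<le> \<bar>y - m\<bar> \<longrightarrow> A y \<le> a" using gap[OF \<delta>] by blast
  obtain K where K: "tn (replicate K a) < \<eta>'" using arch[OF a(1,2) \<eta>'(1)] by blast
  obtain R where R: "0 \<le> R" "\<forall>y. \<eta>' \<le> A y \<longrightarrow> \<bar>y - m\<bar> \<le> R" using bdd[OF \<eta>'(1,2)] by blast
  define N where "N = nat \<lceil>real K * R / \<delta>\<rceil> + 1"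
  show "\<exists>N. \<forall>n\<ge>N. \<forall>w. \<epsilon> \<le> \<bar>sample_mean X n w - m\<bar> \<longrightarrow> \<pi> w < \<eta>"
  proof (intro exI[of _ N] allI impI)
    fix n w assume n: "N \<le> n" and dev: "\<epsilon> \<le> \<bar>sample_mean X n w - m\<bar>"
    show "\<pi> w < \<eta>"
    proof (rule ccontr)
      assume "\<not> \<pi> w < \<eta>"
      then have big: "\<eta>' \<le> \<pi> w" using \<eta>' by linarith
      have n1: "1 \<le> n" using n unfolding N_def by simp
      have KR: "real K * R / \<delta> < real n"
      proof -
        have "real K * R / \<delta> \<le> real (nat \<lceil>real K * R / \<delta>\<rceil>)" by linarith
        also have "\<dots> < real N" unfolding N_def by simp
        also have "\<dots> \<le> real n" using n by simp
        finally show ?thesis .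
      qed
      then have KR': "real K * R < \<delta> * real n" using \<delta> by (simp add: field_simps)
      have Rb: "\<bar>X i w - m\<bar> \<le> R" if "i \<in> {1..n}" for i
        using R(2) bound1[of i w] big that by force
      define Q where "Q i = (\<delta> \<le> \<bar>X i w - m\<bar>)" for i
      have "length (filter Q [1..<n+1]) < K"
      proof (rule ccontr)
        assume "\<not> length (filter Q [1..<n+1]) < K"
        then have "K \<le> length (filter Q [1..<n+1])" by simp
        have "\<pi> w \<le> tn (replicate (length (filter Q [1..<n+1])) a)"
          unfolding Q_def using a by (intro bound_count) auto
        also have "\<dots> \<le> tn (replicate K a)" using a \<open>K \<le> _\<close> by (intro tn_rep_anti) auto
        finally show False using K big by linarith
      qed
      moreover have "length (filter Q [1..<n+1]) = card ({1..n} \<inter> {i. Q i})"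
        by (subst distinct_length_filter) (auto intro: arg_cong[where f=card])
      ultimately have cardK: "card ({1..n} \<inter> {i. Q i}) \<le> K" by simp
      have "(\<Sum>i=1..n. \<bar>X i w - m\<bar>) \<le> (\<Sum>i=1..n. if Q i then R else \<delta>)"
        using Rb by (intro sum_mono) (auto simp: Q_def)
      also have "\<dots> = R * card ({1..n} \<inter> {i. Q i}) + \<delta> * card ({1..n} \<inter> - {i. Q i})"
        by (simp add: sum.If_cases)
      also have "\<dots> \<le> R * K + \<delta> * n"
      proof (intro add_mono mult_left_mono)
        show "real (card ({1..n} \<inter> {i. Q i})) \<le> real K" using cardK by simp
        have "card ({1..n} \<inter> - {i. Q i}) \<le> card {1..n}" by (rule card_mono) auto
        then show "real (card ({1..n} \<inter> - {i. Q i})) \<le> real n" by simp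
      qed (use R \<delta> in auto)
      finally have S: "(\<Sum>i=1..n. \<bar>X i w - m\<bar>) \<le> R * K + \<delta> * n" .
      have "sample_mean X n w - m = (\<Sum>i=1..n. X i w - m) / real n"
        using n1 by (simp add: sample_mean_def sum_subtractf field_simps)
      then have "\<bar>sample_mean X n w - m\<bar> = \<bar>\<Sum>i=1..n. X i w - m\<bar> / real n" by simp
      also have "\<dots> \<le> (\<Sum>i=1..n. \<bar>X i w - m\<bar>) / real n"
        by (intro divide_right_mono sum_abs) simp
      also have "\<dots> \<le> (R * K + \<delta> * n) / real n"
        by (intro divide_right_mono S) simp
      also have "\<dots> < (\<delta> * n + \<delta> * n) / real n"
        using KR' n1 by (intro divide_strict_right_mono) (auto simp: mult.commute)
      also have "\<dots> = \<epsilon>" using n1 by (simp add: \<delta>_def field_simps)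
      finally show False using dev by linarith
    qed
  qed
qed

end

theorem mainTheorem10:
  fixes T :: "real \<Rightarrow> real \<Rightarrow> real"
    and A :: "real \<Rightarrow> real"
    and \<pi> :: "'w \<Rightarrow> real"
    and X :: "nat \<Rightarrow> 'w \<Rightarrow> real"
  assumes "continuous_archimedean_tnorm T"
    and "fuzzy_number A"
    and "poss_dist \<pi>"
    and "T_independent T \<pi> X"
    and "\<forall>n\<ge>1. membership \<pi> (X n) = A"
  shows "conv_distribution \<pi> (sample_mean X) (modal_value A) \<and>
         conv_measure \<pi> (sample_mean X) (modal_value A) \<and>
         conv_almost_surely \<pi> (sample_mean X) (modal_value A) \<and>
         conv_distribution \<pi> (sample_median_odd X) (modal_value A) \<and>
         conv_measure \<pi> (sample_median_odd X) (modal_value A) \<and>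
         conv_almost_surely \<pi> (sample_median_odd X) (modal_value A)"
proof -
  interpret setting T A \<pi> X using assms by unfold_locales
  show ?thesis
    using unif_dist[OF mean_unif] mean_one unif_measure[OF mean_unif] unif_as[OF mean_unif]
      unif_dist[OF median_unif] median_one unif_measure[OF median_unif] unif_as[OF median_unif]
    unfolding m_def by blast
qed

end
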